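(* Let $T$ be a word in the letters $a,b$ of Type I or of Type II. Then $\mathcal{Z}(T)>\tfrac13$ if and only if $\mathcal{Z}(\overline{U}(T))>\tfrac13$, and $\mathcal{Z}(T)>\tfrac13$ if and only if $\mathcal{Z}(\overline{V}(T))>\tfrac13$.
   Context: A chain is a finite sequence $T=[a_1\dots a_n]$ of positive integers; for such $T$ define $\mathcal{Z}(T)=\big(\max_{1\le i\le n}([a_i;a_{i+1},\dots,a_n]+[0;a_{i-1},\dots,a_1])\big)^{-1}$ (finite continued fractions; for $i=1$ the second summand is $0$). Write $a=[22]$ and $b=[11]$; a finite word in the letters $a,b$ is identified with the chain obtained by concatenation. A word is of Type I if it equals $b^{e_1}ab^{e_2}a\cdots ab^{e_n}$ and of Type II if it equals $ba^{e_1}ba^{e_2}b\cdots ba^{e_n}b$, for some $n\ge1$ and integers $e_i\ge1$. The Nielsen moves are the substitutions $U:a\mapsto ab,\ b\mapsto b$ and $V:a\mapsto a,\ b\mapsto ab$ applied letterwise to finite words. For a word $T$ define $\overline{U}(T)=b\,U(T)$ and, when $T$ begins with $b$ (so $V(T)$ begins with $a$), $\overline{V}(T)=a^{-1}V(T)$, the word $V(T)$ with its first letter $a$ deleted. *)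

theory Defs
  imports Complex_Main
begin

fun cf0 :: "nat list \<Rightarrow> real" where
  "cf0 [] = 0"
| "cf0 (x # xs) = 1 / (real x + cf0 xs)"

text \<open>A chain is a list of positive integers. For position i (0-based) the summand is
  [a_i; a_{i+1},...,a_n] + [0; a_{i-1},...,a_1].\<close>
definition chain_term :: "nat list \<Rightarrow> nat \<Rightarrow> real" where
  "chain_term T i = real (T ! i) + cf0 (drop (Suc i) T) + cf0 (rev (take i T))"

definition Zc :: "nat list \<Rightarrow> real" where
  "Zc T = inverse (Max (chain_term T ` {..<length T}))"

datatype letter = LA | LB

definition chain_of :: "letter list \<Rightarrow> nat list" where
  "chain_of w = concat (map (\<lambda>l. case l of LA \<Rightarrow> [2,2] | LB \<Rightarrow> [1,1]) w)"

definition Zw :: "letter list \<Rightarrow> real" where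
  "Zw w = Zc (chain_of w)"

text \<open>Type I: b^{e_1} a b^{e_2} a ... a b^{e_n}.\<close>
definition typeI :: "letter list \<Rightarrow> bool" where
  "typeI w \<longleftrightarrow> (\<exists>e1 es. e1 \<ge> 1 \<and> (\<forall>e\<in>set es. e \<ge> 1) \<and>
      w = replicate e1 LB @ concat (map (\<lambda>e. LA # replicate e LB) es))"

text \<open>Type II: b a^{e_1} b a^{e_2} b ... b a^{e_n} b.\<close>
definition typeII :: "letter list \<Rightarrow> bool" where
  "typeII w \<longleftrightarrow> (\<exists>es. es \<noteq> [] \<and> (\<forall>e\<in>set es. e \<ge> 1) \<and>
      w = LB # concat (map (\<lambda>e. replicate e LA @ [LB]) es))"

definition nielsenU :: "letter list \<Rightarrow> letter list" where
  "nielsenU w = concat (map (\<lambda>l. case l of LA \<Rightarrow> [LA, LB] | LB \<Rightarrow> [LB]) w)"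

definition nielsenV :: "letter list \<Rightarrow> letter list" where
  "nielsenV w = concat (map (\<lambda>l. case l of LA \<Rightarrow> [LA] | LB \<Rightarrow> [LA, LB]) w)"

definition Ubar :: "letter list \<Rightarrow> letter list" where
  "Ubar w = LB # nielsenU w"

text \<open>Only meaningful when w begins with b; then V(w) begins with a, which is deleted.\<close>
definition Vbar :: "letter list \<Rightarrow> letter list" where
  "Vbar w = tl (nielsenV w)"

end

theory Submission imports Defs begin

fun lexl :: "letter list \<Rightarrow> letter list \<Rightarrow> bool" where
  "lexl [] [] = False"
| "lexl [] (y # ys) = True"
| "lexl (x # xs) [] = False"
| "lexl (x # xs) (y # ys) = (if x = y then lexl xs ys else (x = LA \<and> y = LB))"

lemma lexl_irrefl: "\<not> lexl x x"
  by (induction x) auto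

lemma lexl_asym: "lexl x y \<Longrightarrow> \<not> lexl y x"
  by (induction x y rule: lexl.induct) (auto split: if_splits)

lemma lexl_total: "x = y \<or> lexl x y \<or> lexl y x"
proof (induction x arbitrary: y)
  case Nil then show ?case by (cases y) auto
next
  case (Cons a x) then show ?case
    by (cases y; cases a) (auto, (case_tac aa; auto)+)
qed

lemma lexl_app: "lexl (p @ x) (p @ y) = lexl x y"
  by (induction p) auto

lemma lexl_mono_iff:
  assumes "\<And>x y. lexl x y \<Longrightarrow> lexl (f x) (f y)"
  shows "lexl (f x) (f y) = lexl x y"
  using lexl_total[of x y] assms lexl_asym lexl_irrefl by metis

lemma U_simps[simp]: "nielsenU [] = []" "nielsenU (LA # w) = LA # LB # nielsenU w"
  "nielsenU (LB # w) = LB # nielsenU w" "nielsenU (x @ y) = nielsenU x @ nielsenU y"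
  by (auto simp: nielsenU_def)

lemma V_simps[simp]: "nielsenV [] = []" "nielsenV (LA # w) = LA # nielsenV w"
  "nielsenV (LB # w) = LA # LB # nielsenV w" "nielsenV (x @ y) = nielsenV x @ nielsenV y"
  by (auto simp: nielsenV_def)

lemma U_mono: "lexl x y \<Longrightarrow> lexl (nielsenU x) (nielsenU y)"
proof (induction x y rule: lexl.induct)
  case (2 y ys) then show ?case by (cases y) auto
next
  case (4 x xs y ys) then show ?case
    by (cases x; cases y) (auto split: if_splits)
qed auto

lemma lexl_V_LB: "lexl (nielsenV S) (LB # Z)"
proof (cases S)
  case (Cons l S') then show ?thesis by (cases l) auto
qed auto

lemma V_mono: "lexl x y \<Longrightarrow> lexl (nielsenV x) (nielsenV y)"
proof (induction x y rule: lexl.induct)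
  case (2 y ys) then show ?case by (cases y) auto
next
  case (4 x xs y ys) then show ?case
    by (cases x; cases y) (auto split: if_splits simp: lexl_V_LB)
qed auto

lemma U_iff: "lexl (nielsenU x) (nielsenU y) = lexl x y"
  by (rule lexl_mono_iff, rule U_mono)
lemma V_iff: "lexl (nielsenV x) (nielsenV y) = lexl x y"
  by (rule lexl_mono_iff, rule V_mono)


lemma splitU: "nielsenU w = X @ LA # Y \<Longrightarrow>
  \<exists>P S. w = P @ LA # S \<and> X = nielsenU P \<and> Y = LB # nielsenU S"
proof (induction w arbitrary: X)
  case Nil then show ?case by simp
next
  case (Cons l w)
  show ?case
  proof (cases l)
    case LA
    show ?thesis
    proof (cases X)
      case Nil then show ?thesis using Cons.prems LA
        by (intro exI[of _ "[]"] exI[of _ w]) auto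
    next
      case (Cons x X1)
      then obtain X2 where X2: "X1 = LB # X2" "nielsenU w = X2 @ LA # Y"
        using Cons.prems LA by (cases X1) auto
      from Cons.IH[OF X2(2)] obtain P S where "w = P @ LA # S" "X2 = nielsenU P" "Y = LB # nielsenU S"
        by blast
      then show ?thesis using Cons.prems LA \<open>X = x # X1\<close> X2
        by (intro exI[of _ "LA # P"] exI[of _ S]) auto
    qed
  next
    case LB
    then obtain X2 where X2: "X = LB # X2" "nielsenU w = X2 @ LA # Y"
      using Cons.prems by (cases X) auto
    from Cons.IH[OF X2(2)] obtain P S where "w = P @ LA # S" "X2 = nielsenU P" "Y = LB # nielsenU S"
      by blast
    then show ?thesis using LB X2
      by (intro exI[of _ "LB # P"] exI[of _ S]) auto
  qed
qed

lemma splitV: "nielsenV w = X @ LA # Y \<Longrightarrow>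
  \<exists>P l S. w = P @ l # S \<and> X = nielsenV P \<and> Y = (if l = LA then nielsenV S else LB # nielsenV S)"
proof (induction w arbitrary: X)
  case Nil then show ?case by simp
next
  case (Cons l w)
  show ?case
  proof (cases l)
    case LA
    show ?thesis
    proof (cases X)
      case Nil then show ?thesis using Cons.prems LA
        by (intro exI[of _ "[]"] exI[of _ LA] exI[of _ w]) auto
    next
      case (Cons x X1)
      then have X2: "nielsenV w = X1 @ LA # Y"
        using Cons.prems LA by auto
      from Cons.IH[OF X2] obtain P l' S where "w = P @ l' # S" "X1 = nielsenV P"
         "Y = (if l' = LA then nielsenV S else LB # nielsenV S)"
        by blast
      then show ?thesis using Cons.prems LA \<open>X = x # X1\<close>
        by (intro exI[of _ "LA # P"] exI[of _ l'] exI[of _ S]) auto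
    qed
  next
    case LB
    show ?thesis
    proof (cases X)
      case Nil then show ?thesis using Cons.prems LB
        by (intro exI[of _ "[]"] exI[of _ LB] exI[of _ w]) auto
    next
      case (Cons x X1)
      then obtain X2 where X2: "X1 = LB # X2" "nielsenV w = X2 @ LA # Y"
        using Cons.prems LB by (cases X1) auto
      from Cons.IH[OF X2(2)] obtain P l' S where "w = P @ l' # S" "X2 = nielsenV P"
         "Y = (if l' = LA then nielsenV S else LB # nielsenV S)"
        by blast
      then show ?thesis using Cons.prems LB \<open>X = x # X1\<close> X2
        by (intro exI[of _ "LB # P"] exI[of _ l'] exI[of _ S]) auto
    qed
  qed
qed

lemma revU: "rev (nielsenU P) @ [LB] = LB # nielsenU (rev P)"
proof (induction P)
  case (Cons x P) then show ?case by (cases x) auto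
qed simp

lemma revV: "nielsenV (rev P) @ [LA] = LA # rev (nielsenV P)"
proof (induction P)
  case (Cons x P)
  have e: "nielsenV (rev P) @ LA # Z = LA # rev (nielsenV P) @ Z" for Z
    using Cons.IH by (metis append.assoc append_Cons append_Nil)
  show ?case by (cases x) (simp_all add: e)
qed simp

definition Good :: "letter list \<Rightarrow> bool" where
  "Good w \<longleftrightarrow> (\<forall>P S. w = P @ LA # S \<longrightarrow> lexl (rev P) (LB # S) \<and> lexl S (LB # rev P))"

lemma Good_Ubar: "Good (LB # nielsenU w) = Good w"
proof
  assume G: "Good (LB # nielsenU w)"
  show "Good w" unfolding Good_def
  proof (intro allI impI)
    fix P S assume w: "w = P @ LA # S"
    have "LB # nielsenU w = (LB # nielsenU P) @ LA # (LB # nielsenU S)" using w by simp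
    with G have "lexl (rev (LB # nielsenU P)) (LB # LB # nielsenU S) \<and>
       lexl (LB # nielsenU S) (LB # rev (LB # nielsenU P))"
      unfolding Good_def by blast
    then have "lexl (nielsenU (rev P)) (nielsenU (LB # S)) \<and> lexl (nielsenU S) (nielsenU (LB # rev P))"
      using revU[of P] by simp
    then show "lexl (rev P) (LB # S) \<and> lexl S (LB # rev P)" by (simp only: U_iff)
  qed
next
  assume G: "Good w"
  show "Good (LB # nielsenU w)" unfolding Good_def
  proof (intro allI impI)
    fix P' S' assume e: "LB # nielsenU w = P' @ LA # S'"
    then obtain X where X: "P' = LB # X" "nielsenU w = X @ LA # S'"
      by (cases P') auto
    from splitU[OF X(2)] obtain P S where ps: "w = P @ LA # S" "X = nielsenU P" "S' = LB # nielsenU S"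
      by blast
    from G ps(1) have "lexl (rev P) (LB # S) \<and> lexl S (LB # rev P)" unfolding Good_def by blast
    then have "lexl (nielsenU (rev P)) (nielsenU (LB # S)) \<and> lexl (nielsenU S) (nielsenU (LB # rev P))"
      by (simp only: U_iff)
    then show "lexl (rev P') (LB # S') \<and> lexl S' (LB # rev P')"
      using revU[of P] X ps by simp
  qed
qed


definition G1 :: "letter list \<Rightarrow> bool" where
  "G1 w \<longleftrightarrow> (\<forall>P S. w = P @ LA # S \<longrightarrow> lexl (rev P) (LB # S))"
definition G2 :: "letter list \<Rightarrow> bool" where
  "G2 w \<longleftrightarrow> (\<forall>P S. w = P @ LA # LB # S \<longrightarrow> lexl S (rev P))"

lemma Good_G: "Good w = (G1 w \<and> G2 w)"
proof
  assume "Good w" then show "G1 w \<and> G2 w"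
    unfolding Good_def G1_def G2_def by fastforce
next
  assume G: "G1 w \<and> G2 w"
  show "Good w" unfolding Good_def
  proof (intro allI impI conjI)
    fix P S assume w: "w = P @ LA # S"
    then show "lexl (rev P) (LB # S)" using G unfolding G1_def by blast
    show "lexl S (LB # rev P)"
    proof (cases S)
      case (Cons l S1)
      then show ?thesis using G w unfolding G2_def by (cases l) auto
    qed simp
  qed
qed

lemma G1_Cons: "G1 (LB # x) = (\<forall>P S. x = P @ LA # S \<longrightarrow> lexl (rev P @ [LB]) (LB # S))"
  unfolding G1_def
  apply (rule iffI)
   apply (intro allI impI)
   apply (drule_tac x="LB # P" in spec)
   apply simp
  apply (intro allI impI)
  apply (case_tac P)
   apply auto
  done

lemma G2_Cons: "G2 (LB # x) = (\<forall>P S. x = P @ LA # LB # S \<longrightarrow> lexl S (rev P @ [LB]))"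
  unfolding G2_def
  apply (rule iffI)
   apply (intro allI impI)
   apply (drule_tac x="LB # P" in spec)
   apply simp
  apply (intro allI impI)
  apply (case_tac P)
   apply auto
  done

lemma V_not_LB: "nielsenV S \<noteq> LB # Y"
  by (cases S) (auto, (case_tac a; simp)+)

lemma triv3: "lexl (rev (nielsenV P) @ [LB]) (LB # LB # Z)"
proof (cases P rule: rev_exhaust)
  case (snoc P1 x) then show ?thesis by (cases x) auto
qed simp

lemma key1: "lexl (rev P @ [LB]) (LB # S) = lexl (rev (nielsenV P) @ [LB]) (LB # nielsenV S)"
proof -
  have "lexl (rev P @ [LB]) (LB # S) = lexl (nielsenV (rev P @ [LB])) (nielsenV (LB # S))"
    by (simp only: V_iff)
  also have "nielsenV (rev P @ [LB]) = LA # (rev (nielsenV P) @ [LB])"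
  proof -
    have "nielsenV (rev P @ [LB]) = (nielsenV (rev P) @ [LA]) @ [LB]" by simp
    then show ?thesis by (simp only: revV) simp
  qed
  finally show ?thesis by simp
qed

lemma key2: "lexl S (rev P @ [LB]) = lexl (nielsenV S) (rev (nielsenV (P @ [LA])) @ [LB])"
proof -
  have "lexl S (rev P @ [LB]) = lexl (nielsenV S) (nielsenV (rev P @ [LB]))"
    by (simp only: V_iff)
  also have "nielsenV (rev P @ [LB]) = rev (nielsenV (P @ [LA])) @ [LB]"
  proof -
    have "nielsenV (rev P @ [LB]) = (nielsenV (rev P) @ [LA]) @ [LB]" by simp
    then show ?thesis by (simp only: revV) simp
  qed
  finally show ?thesis .
qed

lemma G1_V: "G1 (LB # nielsenV w) = G1 (LB # w)"
  unfolding G1_Cons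
proof (intro iffI allI impI)
  fix P S assume G: "\<forall>P S. nielsenV w = P @ LA # S \<longrightarrow> lexl (rev P @ [LB]) (LB # S)"
    and w: "w = P @ LA # S"
  then have "nielsenV w = nielsenV P @ LA # nielsenV S" by simp
  then have "lexl (rev (nielsenV P) @ [LB]) (LB # nielsenV S)" by (rule G[rule_format])
  then show "lexl (rev P @ [LB]) (LB # S)" by (rule key1[THEN iffD2])
next
  fix X Y assume G: "\<forall>P S. w = P @ LA # S \<longrightarrow> lexl (rev P @ [LB]) (LB # S)"
    and w: "nielsenV w = X @ LA # Y"
  from splitV[OF w] obtain P l S where ps: "w = P @ l # S" "X = nielsenV P"
    "Y = (if l = LA then nielsenV S else LB # nielsenV S)" by blast
  show "lexl (rev X @ [LB]) (LB # Y)"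
  proof (cases l)
    case LA
    with ps have "lexl (rev P @ [LB]) (LB # S)" by (intro G[rule_format]) simp
    then have "lexl (rev (nielsenV P) @ [LB]) (LB # nielsenV S)" by (rule key1[THEN iffD1])
    then show ?thesis using ps LA by simp
  next
    case LB then show ?thesis using ps(2,3) triv3[of P "nielsenV S"] by simp
  qed
qed

lemma G2_V: "G2 (LB # nielsenV w) = G2 (LB # w)"
  unfolding G2_Cons
proof (intro iffI allI impI)
  fix P S assume G: "\<forall>P S. nielsenV w = P @ LA # LB # S \<longrightarrow> lexl S (rev P @ [LB])"
    and w: "w = P @ LA # LB # S"
  then have "nielsenV w = nielsenV (P @ [LA]) @ LA # LB # nielsenV S" by simp
  with G have "lexl (nielsenV S) (rev (nielsenV (P @ [LA])) @ [LB])" by blast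
  then show "lexl S (rev P @ [LB])" by (rule key2[THEN iffD2])
next
  fix X Y assume G: "\<forall>P S. w = P @ LA # LB # S \<longrightarrow> lexl S (rev P @ [LB])"
    and w: "nielsenV w = X @ LA # LB # Y"
  from splitV[OF w] obtain P l S where ps: "w = P @ l # S" "X = nielsenV P"
    "LB # Y = (if l = LA then nielsenV S else LB # nielsenV S)" by blast
  have l: "l = LB" using ps(3) V_not_LB[of S Y] by (cases l) (auto simp del: V_simps)
  with ps have Y: "Y = nielsenV S" by simp
  show "lexl Y (rev X @ [LB])"
  proof (cases P rule: rev_exhaust)
    case Nil then show ?thesis using Y ps by (simp add: lexl_V_LB)
  next
    case (snoc P1 x)
    show ?thesis
    proof (cases x)
      case LA
      with snoc ps l have "w = P1 @ LA # LB # S" by simp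
      with G have "lexl S (rev P1 @ [LB])" by blast
      then have "lexl (nielsenV S) (rev (nielsenV (P1 @ [LA])) @ [LB])" by (rule key2[THEN iffD1])
      then show ?thesis using Y ps snoc LA by simp
    next
      case LB
      then show ?thesis using Y ps snoc by (simp add: lexl_V_LB)
    qed
  qed
qed

lemma Good_Vbar: "Good (LB # nielsenV w) = Good (LB # w)"
  using G1_V G2_V Good_G by blast


definition dg :: "letter \<Rightarrow> nat" where "dg l = (case l of LA \<Rightarrow> 2 | LB \<Rightarrow> 1)"

lemma dg_simps[simp]: "dg LA = 2" "dg LB = 1" by (simp_all add: dg_def)

lemma chain_simps[simp]: "chain_of [] = []" "chain_of (l # w) = dg l # dg l # chain_of w"
  "chain_of (x @ y) = chain_of x @ chain_of y"
  by (auto simp: chain_of_def dg_def split: letter.splits)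

lemma rev_chain: "rev (chain_of P) = chain_of (rev P)"
  by (induction P) auto

lemma chain_ge1: "x \<in> set (chain_of w) \<Longrightarrow> x \<ge> 1"
  by (induction w) (auto simp: dg_def split: letter.splits)

definition cw :: "letter list \<Rightarrow> real" where "cw w = cf0 (chain_of w)"

lemma cf0_nonneg: "cf0 xs \<ge> 0"
  by (induction xs) auto

lemma cw_nonneg: "cw w \<ge> 0" by (simp add: cw_def cf0_nonneg)

lemma cw_Nil[simp]: "cw [] = 0" by (simp add: cw_def)

lemma cw_Cons: "cw (l # w) = 1 / (real (dg l) + 1 / (real (dg l) + cw w))"
  by (simp add: cw_def)

lemma dg_ge1: "real (dg l) \<ge> 1" by (cases l) auto

lemma cw_Cons_bounds: "0 < cw (l # w) \<and> cw (l # w) < 1"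
proof -
  have z: "cw w \<ge> 0" by (rule cw_nonneg)
  have d: "real (dg l) \<ge> 1" by (rule dg_ge1)
  have p: "1 / (real (dg l) + cw w) > 0" using z d by simp
  have "real (dg l) + 1 / (real (dg l) + cw w) > 1" using p d by linarith
  then show ?thesis unfolding cw_Cons by simp
qed

lemma cw_lt1: "cw w < 1"
  by (cases w) (auto simp: cw_Cons_bounds)

lemma inc: assumes "0 \<le> z1" "z1 < z2" "d \<ge> 1"
  shows "1 / (d + 1 / (d + z1)) < 1 / (d + 1 / (d + (z2::real)))"
proof -
  have "1 / (d + z2) < 1 / (d + z1)" using assms by (intro divide_strict_left_mono) auto
  then have "d + 1 / (d + z2) < d + 1 / (d + z1)" by simp
  moreover have "0 < d + 1 / (d + z2)" using assms by (smt (verit) divide_pos_pos)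
  ultimately show ?thesis by (intro divide_strict_left_mono) auto
qed

lemma cwA_lt: "cw (LA # w) < 1/2"
proof -
  have z: "cw w \<ge> 0" by (rule cw_nonneg)
  have "1 / (2 + cw w) > 0" using z by simp
  then have "2 + 1 / (2 + cw w) > 2" by simp
  moreover have "0 < 2 + 1 / (2 + cw w)" using \<open>1 / (2 + cw w) > 0\<close> by linarith
  then have "0 < (2 + 1 / (2 + cw w)) * 2" by (rule mult_pos_pos) simp
  ultimately have "1 / (2 + 1 / (2 + cw w)) < 1/2" by (intro divide_strict_left_mono) auto
  then show ?thesis by (simp add: cw_Cons)
qed

lemma cwB_ge: "cw (LB # w) \<ge> 1/2"
proof -
  have z: "cw w \<ge> 0" by (rule cw_nonneg)
  have "1 / (1 + cw w) \<le> 1" using z by simp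
  moreover have "1 / (1 + cw w) \<ge> 0" using z by simp
  moreover have "0 < 1 + 1 / (1 + cw w)" using \<open>1 / (1 + cw w) \<ge> 0\<close> by linarith
  then have "0 < 2 * (1 + 1 / (1 + cw w))" by (intro mult_pos_pos) simp_all
  ultimately have "1 / (1 + 1 / (1 + cw w)) \<ge> 1/2" by (intro divide_left_mono) auto
  then show ?thesis by (simp add: cw_Cons)
qed

lemma cw_mono: "lexl x y \<Longrightarrow> cw x < cw y"
proof (induction x y rule: lexl.induct)
  case (2 y ys) then show ?case using cw_Cons_bounds[of y ys] by simp
next
  case (4 x xs y ys)
  show ?case
  proof (cases "x = y")
    case True
    then have "cw xs < cw ys" using 4 by simp
    then show ?thesis using True cw_nonneg[of xs] dg_ge1[of y]
      by (simp add: cw_Cons inc)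
  next
    case False
    then have "x = LA" "y = LB" using 4 by (auto split: if_splits)
    then show ?thesis using cwA_lt[of xs] cwB_ge[of ys] by simp
  qed
qed auto

lemma cw_iff: "cw x < cw y \<longleftrightarrow> lexl x y"
  using lexl_total[of x y] cw_mono[of x y] cw_mono[of y x] by auto

lemma chain_split: "chain_of w = L @ x # R \<Longrightarrow> \<exists>P l S. w = P @ l # S \<and> x = dg l \<and>
   ((L = chain_of P \<and> R = dg l # chain_of S) \<or> (L = chain_of P @ [dg l] \<and> R = chain_of S))"
proof (induction w arbitrary: L)
  case Nil then show ?case by simp
next
  case (Cons l w)
  show ?case
  proof (cases L)
    case Nil then show ?thesis using Cons.prems
      by (intro exI[of _ "[]"] exI[of _ l] exI[of _ w]) auto
  next
    case (Cons y L1)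
    show ?thesis
    proof (cases L1)
      case Nil then show ?thesis using Cons.prems \<open>L = y # L1\<close>
        by (intro exI[of _ "[]"] exI[of _ l] exI[of _ w]) auto
    next
      case (Cons z L2)
      then have e: "chain_of w = L2 @ x # R" using Cons.prems \<open>L = y # L1\<close> by simp
      from Cons.IH[OF e] obtain P l' S where "w = P @ l' # S" "x = dg l'"
        "(L2 = chain_of P \<and> R = dg l' # chain_of S) \<or> (L2 = chain_of P @ [dg l'] \<and> R = chain_of S)"
        by blast
      then show ?thesis using Cons.prems \<open>L = y # L1\<close> \<open>L1 = z # L2\<close>
        by (intro exI[of _ "l # P"] exI[of _ l'] exI[of _ S]) auto
    qed
  qed
qed

lemma terms_iff: "(\<forall>i<length T. chain_term T i < 3) \<longleftrightarrow>
   (\<forall>L x R. T = L @ x # R \<longrightarrow> real x + cf0 R + cf0 (rev L) < 3)"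
proof
  assume H: "\<forall>i<length T. chain_term T i < 3"
  show "\<forall>L x R. T = L @ x # R \<longrightarrow> real x + cf0 R + cf0 (rev L) < 3"
  proof (intro allI impI)
    fix L x R assume T: "T = L @ x # R"
    have "chain_term T (length L) < 3" using H T by simp
    then show "real x + cf0 R + cf0 (rev L) < 3" using T by (simp add: chain_term_def)
  qed
next
  assume H: "\<forall>L x R. T = L @ x # R \<longrightarrow> real x + cf0 R + cf0 (rev L) < 3"
  show "\<forall>i<length T. chain_term T i < 3"
  proof (intro allI impI)
    fix i assume i: "i < length T"
    have "T = take i T @ T ! i # drop (Suc i) T" using i by (simp add: id_take_nth_drop)
    then show "chain_term T i < 3" using H unfolding chain_term_def by blast
  qed
qed

lemma alg: "(z::real) \<ge> 0 \<Longrightarrow> 1 / (1 + 1 / (1 + z)) = 1 - 1 / (2 + z)"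
  by (simp add: field_simps)

lemma condA1: "(real 2 + cf0 (2 # chain_of S) + cw Q < 3) = (cw Q < cw (LB # S))"
proof -
  have "cf0 (2 # chain_of S) = 1 / (2 + cw S)" by (simp add: cw_def)
  moreover have "cw (LB # S) = 1 - 1 / (2 + cw S)"
    using alg[OF cw_nonneg[of S]] by (simp add: cw_Cons)
  ultimately show ?thesis by (simp add: less_diff_eq add.commute)
qed

lemma Good_chain: "Good w \<longleftrightarrow> (\<forall>L x R. chain_of w = L @ x # R \<longrightarrow> real x + cf0 R + cf0 (rev L) < 3)"
proof
  assume G: "Good w"
  show "\<forall>L x R. chain_of w = L @ x # R \<longrightarrow> real x + cf0 R + cf0 (rev L) < 3"
  proof (intro allI impI)
    fix L x R assume e: "chain_of w = L @ x # R"
    from chain_split[OF e] obtain P l S where ps: "w = P @ l # S" "x = dg l"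
      "(L = chain_of P \<and> R = dg l # chain_of S) \<or> (L = chain_of P @ [dg l] \<and> R = chain_of S)"
      by blast
    show "real x + cf0 R + cf0 (rev L) < 3"
    proof (cases l)
      case LA
      with G ps(1) have g: "lexl (rev P) (LB # S) \<and> lexl S (LB # rev P)" unfolding Good_def by blast
      from ps(3) show ?thesis
      proof
        assume h: "L = chain_of P \<and> R = dg l # chain_of S"
        have "cw (rev P) < cw (LB # S)" using g by (simp add: cw_iff)
        then show ?thesis using condA1[of S "rev P"] h ps(2) LA
          by (simp add: rev_chain cw_def)
      next
        assume h: "L = chain_of P @ [dg l] \<and> R = chain_of S"
        have "cw S < cw (LB # rev P)" using g by (simp add: cw_iff)
        then show ?thesis using condA1[of "rev P" S] h ps(2) LA
          by (simp add: rev_chain cw_def)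
      qed
    next
      case LB
      have b1: "cw Q < 1" "cw Q \<ge> 0" for Q using cw_lt1 cw_nonneg by auto
      have b2: "1 / (1 + cw Q) \<le> 1" for Q using cw_nonneg[of Q] by simp
      from ps(3) show ?thesis
      proof
        assume h: "L = chain_of P \<and> R = dg l # chain_of S"
        then have "real x + cf0 R + cf0 (rev L) = 1 + 1 / (1 + cw S) + cw (rev P)"
          using ps(2) LB by (simp add: rev_chain cw_def)
        then show ?thesis using b1[of "rev P"] b2[of S] by linarith
      next
        assume h: "L = chain_of P @ [dg l] \<and> R = chain_of S"
        then have "real x + cf0 R + cf0 (rev L) = 1 + cw S + 1 / (1 + cw (rev P))"
          using ps(2) LB by (simp add: rev_chain cw_def)
        then show ?thesis using b1[of S] b2[of "rev P"] by linarith
      qed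
    qed
  qed
next
  assume H: "\<forall>L x R. chain_of w = L @ x # R \<longrightarrow> real x + cf0 R + cf0 (rev L) < 3"
  show "Good w" unfolding Good_def
  proof (intro allI impI conjI)
    fix P S assume w: "w = P @ LA # S"
    have "chain_of w = chain_of P @ 2 # (2 # chain_of S)" using w by simp
    then have "real 2 + cf0 (2 # chain_of S) + cf0 (rev (chain_of P)) < 3" using H by blast
    then have "cw (rev P) < cw (LB # S)" using condA1[of S "rev P"] by (simp add: rev_chain cw_def)
    then show "lexl (rev P) (LB # S)" by (simp add: cw_iff)
    have "chain_of w = (chain_of P @ [2]) @ 2 # chain_of S" using w by simp
    then have "real 2 + cf0 (chain_of S) + cf0 (rev (chain_of P @ [2])) < 3" using H by blast
    then have "real 2 + cf0 (2 # chain_of (rev P)) + cw S < 3" by (simp add: rev_chain cw_def add_ac)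
    then have "cw S < cw (LB # rev P)" using condA1[of "rev P" S] by simp
    then show "lexl S (LB # rev P)" by (simp add: cw_iff)
  qed
qed

lemma Zw_Good: assumes "w \<noteq> []" shows "Zw w > 1/3 \<longleftrightarrow> Good w"
proof -
  let ?T = "chain_of w"
  let ?A = "chain_term ?T ` {..<length ?T}"
  have ne: "?T \<noteq> []" using assms by (cases w) auto
  have fin: "finite ?A" "?A \<noteq> {}" using ne by auto
  have pos: "chain_term ?T 0 > 0"
  proof -
    have "?T ! 0 \<in> set ?T" using ne by simp
    then have "real (?T ! 0) \<ge> 1" using chain_ge1 by force
    then show ?thesis unfolding chain_term_def using cf0_nonneg[of "drop 1 ?T"] cf0_nonneg[of "rev (take 0 ?T)"]
      by simp
  qed
  have "chain_term ?T 0 \<le> Max ?A" using fin ne by (intro Max_ge) auto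
  then have Mpos: "Max ?A > 0" using pos by linarith
  have "Zw w > 1/3 \<longleftrightarrow> Max ?A < 3"
    unfolding Zw_def Zc_def using Mpos by (simp add: field_simps)
  also have "\<dots> \<longleftrightarrow> (\<forall>i<length ?T. chain_term ?T i < 3)"
    using fin by (auto simp: Max_less_iff)
  also have "\<dots> \<longleftrightarrow> Good w" by (simp add: terms_iff Good_chain)
  finally show ?thesis .
qed

theorem proposition4p2:
  fixes T :: "letter list"
  assumes "typeI T \<or> typeII T"
  shows "(Zw T > 1/3 \<longleftrightarrow> Zw (Ubar T) > 1/3) \<and> (Zw T > 1/3 \<longleftrightarrow> Zw (Vbar T) > 1/3)"
proof -
  obtain w0 where T: "T = LB # w0"
    using assms unfolding typeI_def typeII_def
  proof (elim disjE exE conjE)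
    fix e1 es assume "1 \<le> e1" "T = replicate e1 LB @ concat (map (\<lambda>e. LA # replicate e LB) es)"
      and r: "\<And>w0. T = LB # w0 \<Longrightarrow> thesis"
    then show thesis by (cases e1) auto
  qed auto
  have U: "Ubar T = LB # nielsenU T" by (simp add: Ubar_def)
  have V: "Vbar T = LB # nielsenV w0" using T by (simp add: Vbar_def)
  have a: "Zw T > 1/3 \<longleftrightarrow> Good T" using T by (intro Zw_Good) simp
  have b: "Zw (Ubar T) > 1/3 \<longleftrightarrow> Good T" unfolding U
    by (subst Zw_Good) (simp_all only: Good_Ubar list.distinct(2) not_False_eq_True)
  have c: "Zw (Vbar T) > 1/3 \<longleftrightarrow> Good T" unfolding V
    by (subst Zw_Good) (simp_all only: Good_Vbar T[symmetric] list.distinct(2) not_False_eq_True)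
  show ?thesis using a b c by blast
qed

end
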